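(* Let $(X,m)$ be an iterative midpoint set with associated infinitary operation $M$, let $I$ be a set, and let $s,t\in\mathcal{T}_I$ satisfy $\mathrm{w}(s)=\mathrm{w}(t)$. Then $\mathrm{val}(s,x)=\mathrm{val}(t,x)$ for all $x\colon I\to X$.
   Context: $(X,m)$ is a midpoint set ($m(x,x)=x$, $m(x,y)=m(y,x)$, $m(m(x,y),m(z,w))=m(m(x,z),m(y,w))$) that is iterative: for every set $Y$ and $h\colon Y\to X$, $t\colon Y\to Y$ there is a unique $u\colon Y\to X$ with $u(y)=m(h(y),u(t(y)))$; its associated $M\colon X^\omega\to X$ is the unique function with $M_l\,x_l=m(x_0,M_l\,x_{l+1})$. $\mathcal{T}_I$ is the smallest set with $I\subseteq\mathcal{T}_I$, containing the pair $(s,t)$ whenever $s,t\in\mathcal{T}_I$, and containing the sequence $(t_l)_l$ whenever each $t_l\in\mathcal{T}_I$ (well-founded trees with binary and $\omega$-branching nodes and $I$-labelled leaves). Interpretation: $\mathrm{val}(i,x)=x_i$, $\mathrm{val}((s,t),x)=m(\mathrm{val}(s,x),\mathrm{val}(t,x))$, $\mathrm{val}((t_l)_l,x)=M_l\,\mathrm{val}(t_l,x)$. Weight $\mathrm{w}(t)\colon I\to[0,1]$: $\mathrm{w}(i)(j)=\delta_{ij}$, $\mathrm{w}((s,t))(j)=\tfrac12\mathrm{w}(s)(j)+\tfrac12\mathrm{w}(t)(j)$, $\mathrm{w}((t_l)_l)(j)=\sum_{l\ge0}2^{-(l+1)}\mathrm{w}(t_l)(j)$. *)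

theory Defs
  imports Complex_Main
begin

definition midpoint_set :: "('a \<Rightarrow> 'a \<Rightarrow> 'a) \<Rightarrow> bool" where
  "midpoint_set m \<longleftrightarrow>
     (\<forall>x. m x x = x) \<and> (\<forall>x y. m x y = m y x) \<and>
     (\<forall>x y z w. m (m x y) (m z w) = m (m x z) (m y w))"

definition iterative_on :: "'y itself \<Rightarrow> ('a \<Rightarrow> 'a \<Rightarrow> 'a) \<Rightarrow> bool" where
  "iterative_on _ m \<longleftrightarrow>
     (\<forall>(Y::'y set) (h::'y \<Rightarrow> 'a) (t::'y \<Rightarrow> 'y). (\<forall>y\<in>Y. t y \<in> Y) \<longrightarrow>
        (\<exists>u. (\<forall>y\<in>Y. u y = m (h y) (u (t y))) \<and>
             (\<forall>u'. (\<forall>y\<in>Y. u' y = m (h y) (u' (t y))) \<longrightarrow> (\<forall>y\<in>Y. u' y = u y))))"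

text \<open>HOL cannot quantify over all types; we quantify over
  all sets Y of elements of type (nat \<Rightarrow> 'a) + nat, a universe containing X^\<omega> and
  all countable sets, which suffices to recover iterativity for arbitrary sets Y.\<close>
definition iterative :: "('a \<Rightarrow> 'a \<Rightarrow> 'a) \<Rightarrow> bool" where
  "iterative m \<longleftrightarrow> midpoint_set m \<and> iterative_on TYPE((nat \<Rightarrow> 'a) + nat) m"

definition Minf :: "('a \<Rightarrow> 'a \<Rightarrow> 'a) \<Rightarrow> (nat \<Rightarrow> 'a) \<Rightarrow> 'a" where
  "Minf m = (THE M. \<forall>xs. M xs = m (xs 0) (M (\<lambda>l. xs (Suc l))))"

datatype 'i tree = Leaf 'i | Node2 "'i tree" "'i tree" | NodeW "nat \<Rightarrow> 'i tree"

primrec val :: "('a \<Rightarrow> 'a \<Rightarrow> 'a) \<Rightarrow> 'i tree \<Rightarrow> ('i \<Rightarrow> 'a) \<Rightarrow> 'a" where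
  "val m (Leaf i) x = x i"
| "val m (Node2 s t) x = m (val m s x) (val m t x)"
| "val m (NodeW ts) x = Minf m (\<lambda>l. val m (ts l) x)"

primrec weight :: "'i tree \<Rightarrow> 'i \<Rightarrow> real" where
  "weight (Leaf i) j = (if i = j then 1 else 0)"
| "weight (Node2 s t) j = weight s j / 2 + weight t j / 2"
| "weight (NodeW ts) j = (\<Sum>l. weight (ts l) j / 2 ^ (Suc l))"

end

theory Submission
  imports Defs "HOL-Combinatorics.Permutations" "HOL-Library.Multiset"
begin


lemma iterative_mid: "iterative m \<Longrightarrow> midpoint_set m"
  by (simp add: iterative_def)

lemma mid_idem: "midpoint_set m \<Longrightarrow> m x x = x"
  by (simp add: midpoint_set_def)
lemma mid_comm: "midpoint_set m \<Longrightarrow> m x y = m y x"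
  by (simp add: midpoint_set_def)
lemma mid_medial: "midpoint_set m \<Longrightarrow> m (m x y) (m z w) = m (m x z) (m y w)"
  by (simp add: midpoint_set_def)

lemma iter_unique:
  fixes m :: "'a \<Rightarrow> 'a \<Rightarrow> 'a"
  assumes it: "iterative m"
    and Y: "\<forall>y\<in>Y. t y \<in> Y"
    and u1: "\<forall>y\<in>Y. u1 y = m (h y) (u1 (t y))"
    and u2: "\<forall>y\<in>Y. u2 y = m (h y) (u2 (t y))"
    and y: "(y::(nat \<Rightarrow> 'a) + nat) \<in> Y"
  shows "u1 y = u2 y"
proof -
  from it have "iterative_on TYPE((nat \<Rightarrow> 'a) + nat) m" by (simp add: iterative_def)
  then have "\<exists>u. (\<forall>y\<in>Y. u y = m (h y) (u (t y))) \<and>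
             (\<forall>u'. (\<forall>y\<in>Y. u' y = m (h y) (u' (t y))) \<longrightarrow> (\<forall>y\<in>Y. u' y = u y))"
    using Y unfolding iterative_on_def by (elim allE[of _ Y] allE[of _ h] allE[of _ t]) (erule mp)
  then obtain u where "\<forall>u'. (\<forall>y\<in>Y. u' y = m (h y) (u' (t y))) \<longrightarrow> (\<forall>y\<in>Y. u' y = u y)"
    by blast
  then have "u1 y = u y" "u2 y = u y" using u1 u2 y by blast+
  then show ?thesis by simp
qed

lemma iter_exists:
  fixes m :: "'a \<Rightarrow> 'a \<Rightarrow> 'a"
  assumes it: "iterative m"
    and Y: "\<forall>y\<in>Y. t y \<in> Y"
  shows "\<exists>u. \<forall>y\<in>(Y::((nat \<Rightarrow> 'a) + nat) set). u y = m (h y) (u (t y))"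
proof -
  from it have "iterative_on TYPE((nat \<Rightarrow> 'a) + nat) m" by (simp add: iterative_def)
  then have "\<exists>u. (\<forall>y\<in>Y. u y = m (h y) (u (t y))) \<and>
             (\<forall>u'. (\<forall>y\<in>Y. u' y = m (h y) (u' (t y))) \<longrightarrow> (\<forall>y\<in>Y. u' y = u y))"
    using Y unfolding iterative_on_def by (elim allE[of _ Y] allE[of _ h] allE[of _ t]) (erule mp)
  then show ?thesis by blast
qed

lemma Minf_eq:
  fixes m :: "'a \<Rightarrow> 'a \<Rightarrow> 'a"
  assumes it: "iterative m"
  shows "Minf m xs = m (xs 0) (Minf m (\<lambda>l. xs (Suc l)))"
proof -
  define h :: "(nat \<Rightarrow> 'a) + nat \<Rightarrow> 'a" where "h = (\<lambda>y. case y of Inl f \<Rightarrow> f 0 | Inr n \<Rightarrow> undefined)"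
  define t :: "(nat \<Rightarrow> 'a) + nat \<Rightarrow> (nat \<Rightarrow> 'a) + nat"
    where "t = (\<lambda>y. case y of Inl f \<Rightarrow> Inl (\<lambda>l. f (Suc l)) | Inr n \<Rightarrow> Inr n)"
  obtain u where u: "\<forall>y\<in>UNIV. u y = m (h y) (u (t y))"
    using iter_exists[OF it, of UNIV t h] by auto
  define M0 where "M0 = (\<lambda>xs. u (Inl xs))"
  have M0: "\<forall>xs. M0 xs = m (xs 0) (M0 (\<lambda>l. xs (Suc l)))"
  proof
    fix xs show "M0 xs = m (xs 0) (M0 (\<lambda>l. xs (Suc l)))"
      using bspec[OF u, of "Inl xs"] by (simp add: M0_def h_def t_def)
  qed
  have uniq: "M' = M0" if M': "\<forall>xs. M' xs = m (xs 0) (M' (\<lambda>l. xs (Suc l)))" for M'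
  proof
    fix xs
    define u' where "u' = (\<lambda>y. case y of Inl f \<Rightarrow> M' f | Inr n \<Rightarrow> u (Inr n))"
    have "\<forall>y\<in>UNIV. u' y = m (h y) (u' (t y))"
    proof
      fix y show "u' y = m (h y) (u' (t y))"
      proof (cases y)
        case (Inl f) then show ?thesis using spec[OF M', of f] by (simp add: u'_def h_def t_def)
      next
        case (Inr n) then show ?thesis using bspec[OF u, of y] by (simp add: u'_def h_def t_def)
      qed
    qed
    from iter_unique[OF it _ this u, of "Inl xs"] show "M' xs = M0 xs"
      by (simp add: u'_def M0_def)
  qed
  have "Minf m = M0"
    unfolding Minf_def
    apply (rule the_equality)
     apply (rule M0)
    apply (erule uniq)
    done
  then show ?thesis by (simp only:) (rule spec[OF M0])
qed

lemma bisim: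
  fixes m :: "'a \<Rightarrow> 'a \<Rightarrow> 'a"
  assumes it: "iterative m"
    and step: "\<forall>(a,b)\<in>R. \<exists>c a' b'. (a',b') \<in> R \<and> a = m c a' \<and> b = m c b'"
    and ab: "(a,b) \<in> R"
  shows "a = b"
proof -
  from step obtain C A B where CAB: "\<forall>p\<in>R. (A p, B p) \<in> R \<and> fst p = m (C p) (A p) \<and> snd p = m (C p) (B p)"
    by (simp add: split_beta) metis
  define enc :: "'a \<times> 'a \<Rightarrow> (nat \<Rightarrow> 'a) + nat"
    where "enc = (\<lambda>p. Inl (\<lambda>n. if n = 0 then fst p else snd p))"
  define dec :: "(nat \<Rightarrow> 'a) + nat \<Rightarrow> 'a \<times> 'a"
    where "dec = (\<lambda>y. case y of Inl f \<Rightarrow> (f 0, f 1) | Inr n \<Rightarrow> undefined)"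
  have dec_enc: "dec (enc p) = p" for p by (simp add: enc_def dec_def)
  define Y where "Y = enc ` R"
  define h where "h = (\<lambda>y. C (dec y))"
  define t where "t = (\<lambda>y. enc (A (dec y), B (dec y)))"
  have Yc: "\<forall>y\<in>Y. t y \<in> Y" using CAB by (auto simp: Y_def t_def dec_enc)
  have u1: "\<forall>y\<in>Y. fst (dec y) = m (h y) (fst (dec (t y)))"
    using CAB by (auto simp: Y_def h_def t_def dec_enc)
  have u2: "\<forall>y\<in>Y. snd (dec y) = m (h y) (snd (dec (t y)))"
    using CAB by (auto simp: Y_def h_def t_def dec_enc)
  have "fst (dec (enc (a,b))) = snd (dec (enc (a,b)))"
    by (rule iter_unique[OF it Yc u1 u2]) (use ab in \<open>simp add: Y_def\<close>)
  then show ?thesis by (simp add: dec_enc)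
qed



fun avg :: "('x \<Rightarrow> 'x \<Rightarrow> 'x) \<Rightarrow> nat \<Rightarrow> (nat \<Rightarrow> 'x) \<Rightarrow> 'x" where
  "avg m 0 f = f 0"
| "avg m (Suc k) f = m (avg m k f) (avg m k (\<lambda>i. f (2^k + i)))"

lemma avg_cong: "(\<And>i. i < 2^k \<Longrightarrow> f i = g i) \<Longrightarrow> avg m k f = avg m k g"
proof (induction k arbitrary: f g)
  case 0 then show ?case by simp
next
  case (Suc k)
  have "avg m k f = avg m k g" by (rule Suc.IH) (use Suc.prems in auto)
  moreover have "avg m k (\<lambda>i. f (2^k + i)) = avg m k (\<lambda>i. g (2^k + i))"
    by (rule Suc.IH) (use Suc.prems in auto)
  ultimately show ?case by simp
qed

lemma avg_swap0:
  fixes m :: "'x \<Rightarrow> 'x \<Rightarrow> 'x"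
  assumes mid: "midpoint_set m"
  shows "avg m (Suc k) (f \<circ> Transposition.transpose 0 (2^k)) = avg m (Suc k) f"
proof (induction k arbitrary: f)
  case 0
  then show ?case by (simp add: mid_comm[OF mid])
next
  case (Suc k)
  define h :: nat where "h = 2^k"
  have h2: "2^Suc k = h + h" by (simp add: h_def)
  have hpos: "0 < h" by (simp add: h_def)
  define G where "G = (\<lambda>F::nat \<Rightarrow> 'x. \<lambda>i. if i < h then F i else F (h + i))"
  have key: "avg m (Suc (Suc k)) F = m (avg m (Suc k) (G F))
      (m (avg m k (\<lambda>i. F (h + i))) (avg m k (\<lambda>i. F (h + h + (h + i)))))" for F
  proof -
    have "avg m (Suc (Suc k)) F = m (m (avg m k F) (avg m k (\<lambda>i. F (h + i))))
       (m (avg m k (\<lambda>i. F (h + h + i))) (avg m k (\<lambda>i. F (h + h + (h + i)))))"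
      by (simp only: avg.simps h2 h_def[symmetric])
    also have "\<dots> = m (m (avg m k F) (avg m k (\<lambda>i. F (h + h + i))))
       (m (avg m k (\<lambda>i. F (h + i))) (avg m k (\<lambda>i. F (h + h + (h + i)))))"
      by (rule mid_medial[OF mid])
    also have "m (avg m k F) (avg m k (\<lambda>i. F (h + h + i))) = avg m (Suc k) (G F)"
    proof -
      have "avg m k (G F) = avg m k F" by (rule avg_cong) (simp add: G_def h_def)
      moreover have "avg m k (\<lambda>i. G F (2^k + i)) = avg m k (\<lambda>i. F (h + h + i))"
        by (rule avg_cong) (simp add: G_def h_def add.assoc)
      ultimately show ?thesis by simp
    qed
    finally show ?thesis .
  qed
  let ?F' = "f \<circ> Transposition.transpose 0 (2^Suc k)"
  have "avg m (Suc k) (G ?F') = avg m (Suc k) (G f \<circ> Transposition.transpose 0 (2^k))"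
    by (rule avg_cong) (use hpos in \<open>auto simp: G_def h2 transpose_def h_def[symmetric] mult_2\<close>)
  also have "\<dots> = avg m (Suc k) (G f)" by (rule Suc.IH)
  finally have 1: "avg m (Suc k) (G ?F') = avg m (Suc k) (G f)" .
  have 2: "avg m k (\<lambda>i. ?F' (h + i)) = avg m k (\<lambda>i. f (h + i))"
    by (rule avg_cong) (use hpos in \<open>auto simp: h2 transpose_def h_def[symmetric]\<close>)
  have 3: "avg m k (\<lambda>i. ?F' (h + h + (h + i))) = avg m k (\<lambda>i. f (h + h + (h + i)))"
    by (rule avg_cong) (use hpos in \<open>auto simp: h2 transpose_def h_def[symmetric]\<close>)
  show ?case by (simp only: key 1 2 3)
qed

lemma avg_transpose:
  assumes mid: "midpoint_set m"
  shows "a < 2^K \<Longrightarrow> b < 2^K \<Longrightarrow> avg m K (f \<circ> Transposition.transpose a b) = avg m K f"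
proof (induction K arbitrary: f a b)
  case 0 then show ?case by simp
next
  case (Suc K)
  define h :: nat where "h = 2^K"
  have h2: "2^Suc K = h + h" by (simp add: h_def)
  have hpos: "0 < h" by (simp add: h_def)
  have in1: "avg m (Suc K) (g \<circ> Transposition.transpose a b) = avg m (Suc K) g"
    if "a < h" "b < h" for g a b
  proof -
    have "avg m K (g \<circ> Transposition.transpose a b) = avg m K g"
      using Suc.IH[of a b g] that by (simp add: h_def comp_def)
    moreover have "avg m K (\<lambda>i. (g \<circ> Transposition.transpose a b) (2^K + i)) = avg m K (\<lambda>i. g (2^K + i))"
      by (rule avg_cong) (use that in \<open>auto simp: h_def transpose_def\<close>)
    ultimately show ?thesis by simp
  qed
  have in2: "avg m (Suc K) (g \<circ> Transposition.transpose a b) = avg m (Suc K) g"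
    if "h \<le> a" "h \<le> b" "a < h + h" "b < h + h" for g a b
  proof -
    have "avg m K (g \<circ> Transposition.transpose a b) = avg m K g"
      by (rule avg_cong) (use that in \<open>auto simp: h_def transpose_def\<close>)
    moreover have "avg m K (\<lambda>i. (g \<circ> Transposition.transpose a b) (2^K + i))
        = avg m K ((\<lambda>i. g (2^K + i)) \<circ> Transposition.transpose (a - h) (b - h))"
      by (rule avg_cong) (use that in \<open>auto simp: h_def transpose_def\<close>)
    moreover have "\<dots> = avg m K (\<lambda>i. g (2^K + i))"
      by (rule Suc.IH) (use that in \<open>auto simp: h_def\<close>)
    ultimately show ?thesis by simp
  qed
  have cross: "avg m (Suc K) (g \<circ> Transposition.transpose a b) = avg m (Suc K) g"
    if ab: "a < h" "h \<le> b" "b < h + h" for g a b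
  proof -
    define t1 where "t1 = Transposition.transpose (0::nat) a"
    define t2 where "t2 = Transposition.transpose h b"
    define t0 where "t0 = Transposition.transpose (0::nat) h"
    have eq: "Transposition.transpose a b = t1 \<circ> t2 \<circ> t0 \<circ> t1 \<circ> t2"
    proof
      fix x
      consider "x = 0" | "x = a" | "x = h" | "x = b" | "x \<noteq> 0" "x \<noteq> a" "x \<noteq> h" "x \<noteq> b" by blast
      then show "Transposition.transpose a b x = (t1 \<circ> t2 \<circ> t0 \<circ> t1 \<circ> t2) x"
      proof cases
        case 1 then show ?thesis using ab hpos by (cases "a = 0") (simp_all add: t1_def t2_def t0_def transpose_def)
      next
        case 2 then show ?thesis using ab hpos by (cases "a = 0") (simp_all add: t1_def t2_def t0_def transpose_def)
      next
        case 3 then show ?thesis using ab hpos by (cases "b = h") (simp_all add: t1_def t2_def t0_def transpose_def)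
      next
        case 4 then show ?thesis using ab hpos by (cases "b = h") (simp_all add: t1_def t2_def t0_def transpose_def)
      next
        case 5 then show ?thesis using ab hpos by (simp add: t1_def t2_def t0_def transpose_def)
      qed
    qed
    have "avg m (Suc K) (g \<circ> Transposition.transpose a b) = avg m (Suc K) ((g \<circ> t1 \<circ> t2 \<circ> t0 \<circ> t1) \<circ> t2)"
      by (simp add: eq o_assoc)
    also have "\<dots> = avg m (Suc K) ((g \<circ> t1 \<circ> t2 \<circ> t0) \<circ> t1)"
      unfolding t2_def by (rule in2) (use ab in auto)
    also have "\<dots> = avg m (Suc K) (g \<circ> t1 \<circ> t2 \<circ> t0)"
      unfolding t1_def by (rule in1) (use ab hpos in auto)
    also have "\<dots> = avg m (Suc K) (g \<circ> t1 \<circ> t2)"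
      unfolding t0_def h_def by (rule avg_swap0[OF mid])
    also have "\<dots> = avg m (Suc K) (g \<circ> t1)"
      unfolding t2_def by (rule in2) (use ab in auto)
    also have "\<dots> = avg m (Suc K) g"
      unfolding t1_def by (rule in1) (use ab hpos in auto)
    finally show ?thesis .
  qed
  have a: "a < h + h" "b < h + h" using Suc.prems h2 by auto
  show ?case
  proof -
    consider "a < h" "b < h" | "h \<le> a" "h \<le> b" | "a < h" "h \<le> b" | "b < h" "h \<le> a" by linarith
    then show ?thesis
    proof cases
      case 1 then show ?thesis by (rule in1)
    next
      case 2 then show ?thesis using a by (intro in2) auto
    next
      case 3 then show ?thesis using a by (intro cross) auto
    next
      case 4 then have "avg m (Suc K) (f \<circ> Transposition.transpose b a) = avg m (Suc K) f"
        using a by (intro cross) auto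
      then show ?thesis by (metis transpose_commute)
    qed
  qed
qed

lemma avg_permutes:
  assumes mid: "midpoint_set m" and p: "p permutes {..<2^K}"
  shows "avg m K (f \<circ> p) = avg m K f"
  using p finite_lessThan
proof (induction p arbitrary: f rule: permutes_induct)
  case id then show ?case by simp
next
  case (swap a b p)
  have "avg m K (f \<circ> (Transposition.transpose a b \<circ> p)) = avg m K ((f \<circ> Transposition.transpose a b) \<circ> p)"
    by (simp add: o_assoc)
  also have "\<dots> = avg m K (f \<circ> Transposition.transpose a b)" by (rule swap.IH)
  also have "\<dots> = avg m K f" using swap.hyps by (intro avg_transpose[OF mid]) auto
  finally show ?case .
qed



fun chL :: "'i tree \<Rightarrow> 'i tree" where
  "chL (Leaf i) = Leaf i" | "chL (Node2 s t) = s" | "chL (NodeW ts) = ts 0"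
fun chR :: "'i tree \<Rightarrow> 'i tree" where
  "chR (Leaf i) = Leaf i" | "chR (Node2 s t) = t" | "chR (NodeW ts) = NodeW (\<lambda>l. ts (Suc l))"
fun isLeaf :: "'i tree \<Rightarrow> bool" where
  "isLeaf (Leaf i) = True" | "isLeaf (Node2 s t) = False" | "isLeaf (NodeW ts) = False"

lemma val_ch: "iterative m \<Longrightarrow> val m t x = m (val m (chL t) x) (val m (chR t) x)"
proof (cases t)
  case (NodeW ts)
  assume it: "iterative m"
  show ?thesis unfolding NodeW
    by (simp only: val.simps chL.simps chR.simps) (rule Minf_eq[OF it])
qed (auto simp: mid_idem[OF iterative_mid])

lemma weight_bounds: "(\<forall>j. 0 \<le> weight t j) \<and> (\<forall>S. finite S \<longrightarrow> sum (weight t) S \<le> 1)"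
proof (induction t)
  case (Leaf i)
  have "sum (weight (Leaf i)) S \<le> 1" if "finite S" for S
  proof (cases "i \<in> S")
    case True
    then have "sum (weight (Leaf i)) S = sum (weight (Leaf i)) {i}"
      using that by (intro sum.mono_neutral_right) auto
    then show ?thesis by simp
  next
    case False
    then have "sum (weight (Leaf i)) S = 0" by (intro sum.neutral) auto
    then show ?thesis by simp
  qed
  then show ?case by simp
next
  case (Node2 s t)
  have "sum (weight (Node2 s t)) S \<le> 1" if S: "finite S" for S
  proof -
    have "sum (weight s) S \<le> 1" "sum (weight t) S \<le> 1" using Node2.IH S by auto
    then show ?thesis by (simp add: sum.distrib sum_divide_distrib[symmetric])
  qed
  then show ?case using Node2.IH by simp
next
  case (NodeW ts)
  have IH: "0 \<le> weight (ts l) j" "finite S \<Longrightarrow> sum (weight (ts l)) S \<le> 1" for l j S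
    using NodeW by auto
  have le1: "weight (ts l) j \<le> 1" for l j using IH(2)[of "{j}" l] by simp
  have geo: "(\<lambda>l. (1/2::real)^Suc l) sums 1" by (rule power_half_series)
  have summ: "summable (\<lambda>l. weight (ts l) j / 2^Suc l)" for j
    apply (rule summable_comparison_test'[OF sums_summable[OF geo], of 0])
    using IH(1) le1 by (simp add: power_divide divide_right_mono)
  have nn: "0 \<le> weight (NodeW ts) j" for j
    using summ IH(1) by (simp add: suminf_nonneg)
  have "sum (weight (NodeW ts)) S \<le> 1" if S: "finite S" for S
  proof -
    have sw: "(\<Sum>l. \<Sum>j\<in>S. weight (ts l) j / 2^Suc l) = (\<Sum>j\<in>S. \<Sum>l. weight (ts l) j / 2^Suc l)"
      by (rule suminf_sum) (rule summ)
    have "sum (weight (NodeW ts)) S = (\<Sum>l. \<Sum>j\<in>S. weight (ts l) j / 2^Suc l)"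
      unfolding sw by simp
    also have "\<dots> \<le> (\<Sum>l. (1/2::real)^Suc l)"
    proof (rule suminf_le)
      fix l
      have "(\<Sum>j\<in>S. weight (ts l) j / 2^Suc l) = sum (weight (ts l)) S / 2^Suc l"
        by (simp add: sum_divide_distrib)
      also have "\<dots> \<le> 1 / 2^Suc l" using IH(2)[OF S, of l] by (intro divide_right_mono) auto
      finally show "(\<Sum>j\<in>S. weight (ts l) j / 2^Suc l) \<le> (1/2::real)^Suc l"
        by (simp add: power_divide)
    next
      show "summable (\<lambda>l. \<Sum>j\<in>S. weight (ts l) j / 2^Suc l)"
        by (intro summable_sum summ)
    next
      show "summable (\<lambda>l. (1/2::real)^Suc l)" by (rule sums_summable[OF geo])
    qed
    also have "\<dots> = 1" using geo by (simp add: sums_iff)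
    finally show ?thesis .
  qed
  with nn show ?case by blast
qed

lemma weight_nonneg: "0 \<le> weight t j" by (rule spec[OF conjunct1[OF weight_bounds]])
lemma weight_sum_le1: "finite S \<Longrightarrow> sum (weight t) S \<le> 1" by (rule mp[OF spec[OF conjunct2[OF weight_bounds]]])
lemma weight_le1: "weight t j \<le> 1" using weight_sum_le1[of "{j}" t] by simp

lemma weight_summable: "summable (\<lambda>l. weight (ts l) j / 2^Suc l)"
  apply (rule summable_comparison_test'[OF sums_summable[OF power_half_series], of 0])
  by (simp add: power_divide divide_right_mono abs_of_nonneg weight_nonneg weight_le1)

lemma weight_ch: "weight t j = (weight (chL t) j + weight (chR t) j) / 2"
proof (cases t)
  case (NodeW ts)
  have "(\<Sum>l. weight (ts (Suc l)) j / 2^Suc (Suc l)) = (\<Sum>l. weight (ts l) j / 2^Suc l) - weight (ts 0) j / 2"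
    using suminf_split_head[OF weight_summable[of ts j]] by simp
  moreover have "(\<Sum>l. weight (ts (Suc l)) j / 2^Suc (Suc l)) = (\<Sum>l. weight (ts (Suc l)) j / 2^Suc l) / 2"
    using suminf_divide[OF weight_summable[of "\<lambda>l. ts (Suc l)" j], of 2] by (simp add: field_simps)
  ultimately show ?thesis using NodeW by simp
qed auto

fun levF :: "nat \<Rightarrow> 'i tree \<Rightarrow> nat \<Rightarrow> 'i tree" where
  "levF 0 t i = t"
| "levF (Suc n) t i = (if i < 2^n then levF n (chL t) i else levF n (chR t) (i - 2^n))"

lemma avg_levF: "iterative m \<Longrightarrow> avg m n (\<lambda>i. val m (levF n t i) x) = val m t x"
proof (induction n arbitrary: t)
  case 0 then show ?case by simp
next
  case (Suc n)
  have "avg m n (\<lambda>i. val m (levF (Suc n) t i) x) = avg m n (\<lambda>i. val m (levF n (chL t) i) x)"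
    by (rule avg_cong) simp
  moreover have "avg m n (\<lambda>i. val m (levF (Suc n) t (2^n + i)) x) = avg m n (\<lambda>i. val m (levF n (chR t) i) x)"
    by (rule avg_cong) simp
  ultimately show ?case using Suc by (simp add: val_ch[symmetric])
qed

lemma sum_split_add: fixes a b :: nat shows "(\<Sum>i<a + b. g i) = (\<Sum>i<a. g i) + (\<Sum>i<b. g (a + i))"
  by (induction b) (simp_all add: add.assoc)

lemma sum_split2: "(\<Sum>i<(2::nat)^Suc n. g i) = (\<Sum>i<2^n. g i) + (\<Sum>i<2^n. g (2^n + i))"
  using sum_split_add[of g "2^n" "2^n"] by (simp add: mult_2)

lemma weight_levF: "(\<Sum>i<2^n. weight (levF n t i) j) = 2^n * weight t j"
proof (induction n arbitrary: t)
  case 0 then show ?case by simp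
next
  case (Suc n)
  have "(\<Sum>i<2^Suc n. weight (levF (Suc n) t i) j)
      = (\<Sum>i<2^n. weight (levF n (chL t) i) j) + (\<Sum>i<2^n. weight (levF n (chR t) i) j)"
    by (simp only: sum_split2) simp
  also have "\<dots> = 2^Suc n * weight t j" using Suc by (simp add: weight_ch[of t j] field_simps)
  finally show ?case .
qed

definition NL :: "nat \<Rightarrow> 'i tree \<Rightarrow> real" where
  "NL n t = (\<Sum>i<2^n. if isLeaf (levF n t i) then 0 else 1)"

lemma NL_Suc: "NL (Suc n) t = NL n (chL t) + NL n (chR t)"
  unfolding NL_def by (simp only: sum_split2) simp

lemma levF_Leaf: "levF n (Leaf a) i = Leaf a"
  by (induction n arbitrary: i) auto

lemma NL_Leaf: "NL n (Leaf a) = 0"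
  by (simp add: NL_def levF_Leaf)

lemma NL_le: "NL n t \<le> 2^n"
proof -
  have "NL n t \<le> (\<Sum>i<(2::nat)^n. (1::real))" unfolding NL_def by (intro sum_mono) auto
  then show ?thesis by simp
qed

lemma NL_nonneg: "0 \<le> NL n t"
  unfolding NL_def by (intro sum_nonneg) auto

lemma NL_NodeW_unroll:
  "L \<le> n \<Longrightarrow> NL n (NodeW ts) = (\<Sum>l<L. NL (n - Suc l) (ts l)) + NL (n - L) (NodeW (\<lambda>k. ts (k + L)))"
proof (induction L)
  case 0 then show ?case by simp
next
  case (Suc L)
  then have e: "n - L = Suc (n - Suc L)" by simp
  have "NL (n - L) (NodeW (\<lambda>k. ts (k + L))) = NL (n - Suc L) (ts L) + NL (n - Suc L) (NodeW (\<lambda>k. ts (k + Suc L)))"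
    by (simp only: e NL_Suc) simp
  with Suc show ?case by simp
qed

lemma NL_small: "\<forall>\<epsilon>>0. \<exists>N. \<forall>n\<ge>N. NL n t < \<epsilon> * 2^n"
proof (induction t)
  case (Leaf i) then show ?case by (auto simp: NL_Leaf)
next
  case (Node2 s t)
  show ?case
  proof (intro allI impI)
    fix \<epsilon> :: real assume e: "\<epsilon> > 0"
    obtain N1 where N1: "\<forall>n\<ge>N1. NL n s < \<epsilon> * 2^n" using Node2.IH(1) e by blast
    obtain N2 where N2: "\<forall>n\<ge>N2. NL n t < \<epsilon> * 2^n" using Node2.IH(2) e by blast
    have "NL n (Node2 s t) < \<epsilon> * 2^n" if n: "n \<ge> Suc (max N1 N2)" for n
    proof -
      obtain n' where n': "n = Suc n'" "n' \<ge> max N1 N2" using n by (cases n) auto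
      have "NL n (Node2 s t) = NL n' s + NL n' t" by (simp add: n' NL_Suc)
      also have "\<dots> < \<epsilon> * 2^n' + \<epsilon> * 2^n'" using N1 N2 n' by (intro add_strict_mono) auto
      finally show ?thesis by (simp add: n')
    qed
    then show "\<exists>N. \<forall>n\<ge>N. NL n (Node2 s t) < \<epsilon> * 2^n" by blast
  qed
next
  case (NodeW ts)
  show ?case
  proof (intro allI impI)
    fix \<epsilon> :: real assume e: "\<epsilon> > 0"
    have "\<forall>l. \<exists>N. \<forall>n\<ge>N. NL n (ts l) < (\<epsilon>/2) * 2^n"
    proof
      fix l
      have "\<forall>\<epsilon>>0. \<exists>N. \<forall>n\<ge>N. NL n (ts l) < \<epsilon> * 2^n" using NodeW.IH[of "ts l"] by simp
      then show "\<exists>N. \<forall>n\<ge>N. NL n (ts l) < (\<epsilon>/2) * 2^n"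
        using e by (elim allE[of _ "\<epsilon>/2"]) simp
    qed
    then obtain Nl where Nl: "\<And>l n. n \<ge> Nl l \<Longrightarrow> NL n (ts l) < (\<epsilon>/2) * 2^n" by metis
    obtain L where L: "2 / \<epsilon> < 2^L" using real_arch_pow[of 2 "2/\<epsilon>"] by auto
    define N where "N = L + (\<Sum>l<L. Nl l)"
    have "NL n (NodeW ts) < \<epsilon> * 2^n" if n: "n \<ge> N" for n
    proof -
      have Ln: "L \<le> n" using n by (simp add: N_def)
      have "(\<Sum>l<L. NL (n - Suc l) (ts l)) \<le> (\<Sum>l<L. (\<epsilon>/2) * 2^(n - Suc l))"
      proof (rule sum_mono)
        fix l assume l: "l \<in> {..<L}"
        have "Nl l \<le> (\<Sum>l<L. Nl l)" using l by (intro member_le_sum) auto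
        then have "n - Suc l \<ge> Nl l" using n l by (simp add: N_def)
        then show "NL (n - Suc l) (ts l) \<le> (\<epsilon>/2) * 2^(n - Suc l)" using Nl by (simp add: less_imp_le)
      qed
      also have "\<dots> = (\<Sum>l<L. (\<epsilon>/2) * 2^n * (1/2)^Suc l)"
      proof (rule sum.cong[OF refl])
        fix l assume "l \<in> {..<L}"
        then have "(2::real)^(n - Suc l) = 2^n * (1/2)^Suc l"
          using Ln by (simp add: power_diff power_divide)
        then show "(\<epsilon>/2) * 2^(n - Suc l) = (\<epsilon>/2) * 2^n * (1/2)^Suc l" by simp
      qed
      also have "\<dots> = (\<epsilon>/2) * 2^n * (\<Sum>l<L. (1/2)^Suc l)"
        by (rule sum_distrib_left[symmetric])
      also have "\<dots> \<le> (\<epsilon>/2) * 2^n * 1"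
      proof -
        have "(\<Sum>l<L. (1/2::real)^Suc l) \<le> 1"
          using sum_le_suminf[OF sums_summable[OF power_half_series], of "{..<L}"] power_half_series
          by (simp add: sums_iff)
        then show ?thesis using e by (intro mult_left_mono) auto
      qed
      finally have A: "(\<Sum>l<L. NL (n - Suc l) (ts l)) \<le> (\<epsilon>/2) * 2^n" by simp
      have "NL (n - L) (NodeW (\<lambda>k. ts (k + L))) \<le> 2^(n - L)" by (rule NL_le)
      also have "\<dots> = 2^n / 2^L" using Ln by (simp add: power_diff)
      also have "\<dots> < (\<epsilon>/2) * 2^n"
      proof -
        have "1 < (\<epsilon>/2) * 2^L" using L e by (simp add: field_simps)
        then have "2^n * 1 < 2^n * ((\<epsilon>/2) * 2^L)" by simp
        then show ?thesis by (simp add: field_simps)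
      qed
      finally have B: "NL (n - L) (NodeW (\<lambda>k. ts (k + L))) < (\<epsilon>/2) * 2^n" .
      show ?thesis using NL_NodeW_unroll[OF Ln, of ts] A B by simp
    qed
    then show "\<exists>N. \<forall>n\<ge>N. NL n (NodeW ts) < \<epsilon> * 2^n" by blast
  qed
qed



lemma avg_blocks: "avg m (K + n) h = avg m K (\<lambda>a. avg m n (\<lambda>i. h (a * 2^n + i)))"
proof (induction K arbitrary: h)
  case 0 then show ?case by simp
next
  case (Suc K)
  have "avg m (Suc K + n) h = m (avg m (K + n) h) (avg m (K + n) (\<lambda>i. h (2^(K + n) + i)))"
    by simp
  also have "\<dots> = m (avg m K (\<lambda>a. avg m n (\<lambda>i. h (a * 2^n + i))))
                     (avg m K (\<lambda>a. avg m n (\<lambda>i. h (2^(K + n) + (a * 2^n + i)))))"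
    by (simp only: Suc.IH)
  also have "(\<lambda>a. avg m n (\<lambda>i. h (2^(K + n) + (a * 2^n + i)))) = (\<lambda>a. avg m n (\<lambda>i. h ((2^K + a) * 2^n + i)))"
    by (simp add: algebra_simps power_add)
  finally show ?case by simp
qed

lemma sum_blocks: "(\<Sum>j<(2::nat)^(K + n). h j) = (\<Sum>a<(2::nat)^K. \<Sum>i<(2::nat)^n. h (a * 2^n + i))"
proof (induction K arbitrary: h)
  case 0 then show ?case by simp
next
  case (Suc K)
  have "(\<Sum>j<(2::nat)^(Suc K + n). h j) = (\<Sum>j<(2::nat)^Suc (K + n). h j)" by simp
  also have "\<dots> = (\<Sum>j<(2::nat)^(K + n). h j) + (\<Sum>j<(2::nat)^(K + n). h (2^(K+n) + j))"
    by (rule sum_split2)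
  also have "\<dots> = (\<Sum>a<(2::nat)^K. \<Sum>i<(2::nat)^n. h (a * 2^n + i)) +
                   (\<Sum>a<(2::nat)^K. \<Sum>i<(2::nat)^n. h (2^(K+n) + (a * 2^n + i)))"
    by (simp only: Suc.IH)
  also have "(\<lambda>a. \<Sum>i<(2::nat)^n. h (2^(K+n) + (a * 2^n + i))) = (\<lambda>a. \<Sum>i<(2::nat)^n. h ((2^K + a) * 2^n + i))"
    by (simp add: algebra_simps power_add)
  also have "(\<Sum>a<(2::nat)^K. \<Sum>i<(2::nat)^n. h (a * 2^n + i)) + (\<Sum>a<(2::nat)^K. \<Sum>i<(2::nat)^n. h ((2^K + a) * 2^n + i))
      = (\<Sum>a<(2::nat)^Suc K. \<Sum>i<(2::nat)^n. h (a * 2^n + i))"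
    by (rule sum_split2[symmetric])
  finally show ?case .
qed

lemma ex_submset: "k \<le> size M \<Longrightarrow> \<exists>C. C \<subseteq># M \<and> size C = k"
proof (induction M arbitrary: k)
  case empty then show ?case by simp
next
  case (add a M)
  show ?case
  proof (cases "k \<le> size M")
    case True
    then obtain C where "C \<subseteq># M" "size C = k" using add.IH by blast
    moreover have "M \<subseteq># add_mset a M"
      by (metis (no_types) add_mset_add_single mset_subset_eq_add_left)
    ultimately show ?thesis using subset_mset.order_trans by blast
  next
    case False
    then have "k = size (add_mset a M)" using add.prems by simp
    then show ?thesis by blast
  qed
qed

lemma size_sum_count: "finite T \<Longrightarrow> set_mset M \<subseteq> T \<Longrightarrow> size M = (\<Sum>x\<in>T. count M x)"
  by (simp add: size_multiset_overloaded_eq) (rule sum.mono_neutral_left, auto simp: not_in_iff)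

lemma count_image_upto: fixes N :: nat shows "real (count (image_mset F (mset_set {..<N})) x) = (\<Sum>j<N. if F j = x then 1 else 0)"
proof (induction N)
  case 0 then show ?case by simp
next
  case (Suc N)
  have "mset_set {..<Suc N} = add_mset N (mset_set {..<N})"
    by (simp add: lessThan_Suc)
  then show ?case using Suc by simp
qed

lemma sum_if_compl: "(\<Sum>j<N. if P j then 1 else 0) = real N - (\<Sum>j<N. if P j then 0 else (1::real))"
proof -
  have e: "(if P j then 1 else 0) + (if P j then 0 else 1::real) = 1" for j by simp
  have "(\<Sum>j<N. (if P j then 1 else 0) + (if P j then 0 else (1::real))) = real N"
    by (simp only: e) simp
  then show ?thesis by (simp add: sum.distrib)
qed

fun lab :: "'i tree \<Rightarrow> 'i" where "lab (Leaf i) = i" | "lab _ = undefined"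

lemma common_leaves:
  fixes F G :: "nat \<Rightarrow> 'i tree"
  assumes wFG: "\<And>i. (\<Sum>j<N. weight (F j) i) = (\<Sum>j<N. weight (G j) i)"
    and nF: "(\<Sum>j<N. if isLeaf (F j) then 0 else 1::real) \<le> real N / 4"
    and nG: "(\<Sum>j<N. if isLeaf (G j) then 0 else 1::real) \<le> real N / 4"
  shows "real N / 2 \<le> real (size (filter_mset isLeaf (image_mset F (mset_set {..<N}) \<inter># image_mset G (mset_set {..<N}))))"
proof -
  define AF where "AF = image_mset F (mset_set {..<N})"
  define AG where "AG = image_mset G (mset_set {..<N})"
  define T where "T = {x \<in> F ` {..<N} \<union> G ` {..<N}. isLeaf x}"
  have finT: "finite T" by (simp add: T_def)
  define cF where "cF = (\<lambda>x. \<Sum>j<N. if F j = x then 1 else (0::real))"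
  define cG where "cG = (\<lambda>x. \<Sum>j<N. if G j = x then 1 else (0::real))"
  define W where "W = (\<lambda>x. \<Sum>j<N. weight (F j) (lab x))"
  have leafT: "x \<in> T \<Longrightarrow> x = Leaf (lab x)" for x by (cases x) (auto simp: T_def)
  have ind_le: "(if t = Leaf i then 1 else 0) \<le> weight t i" for t :: "'i tree" and i
    by (auto simp: weight_nonneg)
  have cF_le: "cF x \<le> W x" if "x \<in> T" for x
  proof -
    have "cF x = (\<Sum>j<N. if F j = Leaf (lab x) then 1 else 0)" using leafT[OF that] by (simp add: cF_def)
    also have "\<dots> \<le> W x" unfolding W_def by (intro sum_mono ind_le)
    finally show ?thesis .
  qed
  have cG_le: "cG x \<le> W x" if "x \<in> T" for x
  proof -
    have "cG x = (\<Sum>j<N. if G j = Leaf (lab x) then 1 else 0)" using leafT[OF that] by (simp add: cG_def)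
    also have "\<dots> \<le> (\<Sum>j<N. weight (G j) (lab x))" by (intro sum_mono ind_le)
    also have "\<dots> = W x" by (simp add: W_def wFG)
    finally show ?thesis .
  qed
  have "set_mset (filter_mset isLeaf (AF \<inter># AG)) \<subseteq> T"
    by (auto simp: T_def AF_def AG_def)
  then have "size (filter_mset isLeaf (AF \<inter># AG)) = (\<Sum>x\<in>T. count (filter_mset isLeaf (AF \<inter># AG)) x)"
    by (rule size_sum_count[OF finT])
  also have "\<dots> = (\<Sum>x\<in>T. min (count AF x) (count AG x))"
    by (rule sum.cong) (auto simp: T_def)
  finally have sz0: "size (filter_mset isLeaf (AF \<inter># AG)) = (\<Sum>x\<in>T. min (count AF x) (count AG x))" .
  have sz: "real (size (filter_mset isLeaf (AF \<inter># AG))) = (\<Sum>x\<in>T. min (cF x) (cG x))"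
    unfolding sz0 of_nat_sum of_nat_min
    by (rule sum.cong[OF refl]) (simp only: AF_def AG_def cF_def cG_def count_image_upto)
  have "(\<Sum>x\<in>T. min (cF x) (cG x)) \<ge> (\<Sum>x\<in>T. cF x + cG x - W x)"
    by (intro sum_mono) (use cF_le cG_le in \<open>auto simp: min_def\<close>)
  moreover have sF: "(\<Sum>x\<in>T. cF x) \<ge> 3 * real N / 4"
  proof -
    have "(\<Sum>x\<in>T. cF x) = (\<Sum>j<N. \<Sum>x\<in>T. if F j = x then 1 else (0::real))"
      unfolding cF_def by (rule sum.swap)
    also have "\<dots> = (\<Sum>j<N. if isLeaf (F j) then 1 else 0)"
      by (rule sum.cong) (auto simp: finT T_def)
    also have "\<dots> = real N - (\<Sum>j<N. if isLeaf (F j) then 0 else 1::real)"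
      by (rule sum_if_compl)
    finally show ?thesis using nF by simp
  qed
  moreover have sG: "(\<Sum>x\<in>T. cG x) \<ge> 3 * real N / 4"
  proof -
    have "(\<Sum>x\<in>T. cG x) = (\<Sum>j<N. \<Sum>x\<in>T. if G j = x then 1 else (0::real))"
      unfolding cG_def by (rule sum.swap)
    also have "\<dots> = (\<Sum>j<N. if isLeaf (G j) then 1 else 0)"
      by (rule sum.cong) (auto simp: finT T_def)
    also have "\<dots> = real N - (\<Sum>j<N. if isLeaf (G j) then 0 else 1::real)"
      by (rule sum_if_compl)
    finally show ?thesis using nG by simp
  qed
  moreover have sW: "(\<Sum>x\<in>T. W x) \<le> real N"
  proof -
    have inj: "inj_on lab T" by (rule inj_onI) (metis leafT)
    have "(\<Sum>x\<in>T. W x) = (\<Sum>j<N. \<Sum>x\<in>T. weight (F j) (lab x))"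
      unfolding W_def by (rule sum.swap)
    also have "\<dots> = (\<Sum>j<N. sum (weight (F j)) (lab ` T))"
      by (simp add: sum.reindex[OF inj])
    also have "\<dots> \<le> (\<Sum>j<N. 1)"
      by (intro sum_mono weight_sum_le1) (simp add: finT)
    finally show ?thesis by simp
  qed
  ultimately have "(\<Sum>x\<in>T. min (cF x) (cG x)) \<ge> real N / 2"
    by (simp add: sum.distrib sum_subtractf)
  then show ?thesis using sz by (simp add: AF_def AG_def)
qed



lemma wsum_list: "(\<Sum>i<length xs. weight (xs!i) j) = (\<Sum>t\<in>#mset xs. weight t j)"
  by (induction xs) (simp_all add: sum.lessThan_Suc_shift del: sum.lessThan_Suc)

lemma wsum_upto: "(\<Sum>t\<in>#image_mset F (mset_set {..<N}). weight t j) = (\<Sum>i<N. weight (F i) j)"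
  by (simp add: sum_unfold_sum_mset image_mset.compositionality comp_def)

lemma step:
  fixes m :: "'a \<Rightarrow> 'a \<Rightarrow> 'a" and x :: "'i \<Rightarrow> 'a" and f g :: "nat \<Rightarrow> 'i tree"
  assumes it: "iterative m"
    and wt: "\<forall>j. (\<Sum>a<(2::nat)^K. weight (f a) j) = (\<Sum>a<(2::nat)^K. weight (g a) j)"
  shows "\<exists>c K' f' g'. (\<forall>j. (\<Sum>a<(2::nat)^K'. weight (f' a) j) = (\<Sum>a<(2::nat)^K'. weight (g' a) j)) \<and>
     avg m K (\<lambda>a. val m (f a) x) = m c (avg m K' (\<lambda>a. val m (f' a) x)) \<and>
     avg m K (\<lambda>a. val m (g a) x) = m c (avg m K' (\<lambda>a. val m (g' a) x))"
proof -
  have mid: "midpoint_set m" by (rule iterative_mid[OF it])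
  define V where "V = (\<lambda>t. val m t x)"
  have "\<forall>a. \<exists>N. \<forall>n\<ge>N. NL n (f a) < (1/4) * 2^n \<and> NL n (g a) < (1/4) * 2^n"
  proof
    fix a
    obtain N1 where N1: "\<forall>n\<ge>N1. NL n (f a) < (1/4) * 2^n"
      using NL_small[of "f a"] by (elim allE[of _ "1/4"]) auto
    obtain N2 where N2: "\<forall>n\<ge>N2. NL n (g a) < (1/4) * 2^n"
      using NL_small[of "g a"] by (elim allE[of _ "1/4"]) auto
    show "\<exists>N. \<forall>n\<ge>N. NL n (f a) < (1/4) * 2^n \<and> NL n (g a) < (1/4) * 2^n"
      using N1 N2 by (intro exI[of _ "max N1 N2"]) auto
  qed
  from choice[OF this] obtain Nf where Nf: "\<forall>a. \<forall>n\<ge>Nf a. NL n (f a) < (1/4) * 2^n \<and> NL n (g a) < (1/4) * 2^n"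
    by blast
  define n0 where "n0 = (\<Sum>a<(2::nat)^K. Nf a)"
  define n where "n = Suc n0"
  have nbig: "NL n (f a) < (1/4) * 2^n \<and> NL n (g a) < (1/4) * 2^n" if "a < 2^K" for a
  proof -
    have "Nf a \<le> n0" unfolding n0_def using that by (intro member_le_sum) auto
    then have "Nf a \<le> n" by (simp add: n_def)
    then show ?thesis using Nf by blast
  qed
  define M' where "M' = K + n0"
  have KnM: "K + n = Suc M'" by (simp add: n_def M'_def)
  define N :: nat where "N = 2^(K + n)"
  define H :: nat where "H = 2^M'"
  have NH: "N = H + H" by (simp add: N_def H_def KnM)
  define E where "E = (\<lambda>h::nat \<Rightarrow> 'i tree. \<lambda>j. levF n (h (j div 2^n)) (j mod 2^n))"
  have Eblk: "E h (a * 2^n + i) = levF n (h a) i" if "i < 2^n" for h a i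
    using that by (simp add: E_def)
  have avgE: "avg m (K + n) (\<lambda>j. V (E h j)) = avg m K (\<lambda>a. V (h a))" for h
  proof -
    have "avg m (K + n) (\<lambda>j. V (E h j)) = avg m K (\<lambda>a. avg m n (\<lambda>i. V (E h (a * 2^n + i))))"
      by (rule avg_blocks)
    also have "\<dots> = avg m K (\<lambda>a. avg m n (\<lambda>i. V (levF n (h a) i)))"
      by (intro avg_cong arg_cong[where f="avg m n"]) (auto intro!: avg_cong simp: Eblk)
    also have "\<dots> = avg m K (\<lambda>a. V (h a))"
      by (simp add: V_def avg_levF[OF it])
    finally show ?thesis .
  qed
  have wE: "(\<Sum>j<N. weight (E h j) i) = 2^n * (\<Sum>a<(2::nat)^K. weight (h a) i)" for h i
  proof -
    have "(\<Sum>j<N. weight (E h j) i) = (\<Sum>a<(2::nat)^K. \<Sum>k<(2::nat)^n. weight (E h (a * 2^n + k)) i)"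
      unfolding N_def by (rule sum_blocks)
    also have "\<dots> = (\<Sum>a<(2::nat)^K. \<Sum>k<(2::nat)^n. weight (levF n (h a) k) i)"
      by (intro sum.cong refl) (simp add: Eblk)
    also have "\<dots> = (\<Sum>a<(2::nat)^K. 2^n * weight (h a) i)"
      by (simp add: weight_levF)
    finally show ?thesis by (simp add: sum_distrib_left)
  qed
  have nlE: "(\<Sum>j<N. if isLeaf (E h j) then 0 else 1::real) \<le> real N / 4"
    if hb: "\<And>a. a < 2^K \<Longrightarrow> NL n (h a) < (1/4) * 2^n" for h
  proof -
    have "(\<Sum>j<N. if isLeaf (E h j) then 0 else 1::real)
        = (\<Sum>a<(2::nat)^K. \<Sum>k<(2::nat)^n. if isLeaf (E h (a * 2^n + k)) then 0 else 1::real)"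
      unfolding N_def by (rule sum_blocks)
    also have "\<dots> = (\<Sum>a<(2::nat)^K. NL n (h a))"
      by (intro sum.cong refl) (simp add: Eblk NL_def)
    also have "\<dots> \<le> (\<Sum>a<(2::nat)^K. (1/4) * 2^n)"
      by (intro sum_mono less_imp_le hb) simp
    also have "\<dots> = real N / 4" by (simp add: N_def power_add)
    finally show ?thesis .
  qed
  define F where "F = E f"
  define G where "G = E g"
  define AF where "AF = image_mset F (mset_set {..<N})"
  define AG where "AG = image_mset G (mset_set {..<N})"
  have wFG: "(\<Sum>j<N. weight (F j) i) = (\<Sum>j<N. weight (G j) i)" for i
    using wt by (simp add: F_def G_def wE)
  have nF: "(\<Sum>j<N. if isLeaf (F j) then 0 else 1::real) \<le> real N / 4"
    unfolding F_def by (rule nlE) (erule conjunct1[OF nbig])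
  have nG: "(\<Sum>j<N. if isLeaf (G j) then 0 else 1::real) \<le> real N / 4"
    unfolding G_def by (rule nlE) (erule conjunct2[OF nbig])
  have "real N / 2 \<le> real (size (filter_mset isLeaf (AF \<inter># AG)))"
    unfolding AF_def AG_def by (rule common_leaves[OF wFG nF nG])
  then have "H \<le> size (filter_mset isLeaf (AF \<inter># AG))" using NH by simp
  then obtain C where C: "C \<subseteq># filter_mset isLeaf (AF \<inter># AG)" "size C = H"
    using ex_submset by blast
  have CAF: "C \<subseteq># AF" using C(1)
    by (meson multiset_filter_subset subset_mset.inf_le1 subset_mset.order_trans)
  have CAG: "C \<subseteq># AG" using C(1)
    by (meson multiset_filter_subset subset_mset.inf_le2 subset_mset.order_trans)
  obtain cl where cl: "mset cl = C" using ex_mset by blast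
  obtain dF where dF: "mset dF = AF - C" using ex_mset by blast
  obtain dG where dG: "mset dG = AG - C" using ex_mset by blast
  have lcl: "length cl = H" using cl C(2) by (metis size_mset)
  have sAF: "size AF = N" by (simp add: AF_def)
  have sAG: "size AG = N" by (simp add: AG_def)
  have ldF: "length dF = H" using dF CAF sAF C(2) NH by (metis size_mset size_Diff_submset add_diff_cancel_left')
  have ldG: "length dG = H" using dG CAG sAG C(2) NH by (metis size_mset size_Diff_submset add_diff_cancel_left')
  have reorder: "avg m (K + n) (\<lambda>j. V (P j)) = m (avg m M' (\<lambda>i. V (cl!i))) (avg m M' (\<lambda>i. V (d!i)))"
    if P: "P = E h" and A: "image_mset P (mset_set {..<N}) = C + mset d" and ld: "length d = H" for h P d
  proof -
    define P' where "P' = (\<lambda>i. if i < H then cl!i else d!(i - H))"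
    have "map P' [0..<N] = cl @ d"
      by (rule nth_equalityI) (auto simp: nth_append P'_def lcl ld NH)
    then have "mset (map P' [0..<N]) = mset (map P [0..<N])"
      using A cl by (simp add: mset_map atLeast0LessThan)
    then obtain p where p: "p permutes {..<length (map P [0..<N])}" "permute_list p (map P [0..<N]) = map P' [0..<N]"
      by (rule mset_eq_permutation)
    have pN: "p permutes {..<N}" using p(1) by simp
    have P'p: "P' i = P (p i)" if "i < N" for i
    proof -
      have "P' i = map P' [0..<N] ! i" using that by simp
      also have "\<dots> = permute_list p (map P [0..<N]) ! i" using p(2) by simp
      also have "\<dots> = map P [0..<N] ! p i" using p(1) that by (simp add: permute_list_nth)
      also have "\<dots> = P (p i)" using permutes_in_image[OF pN] that by simp
      finally show ?thesis .
    qed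
    have "avg m (K + n) (\<lambda>j. V (P j)) = avg m (K + n) ((\<lambda>j. V (P j)) \<circ> p)"
      by (rule avg_permutes[OF mid, symmetric]) (simp add: pN N_def[symmetric])
    also have "\<dots> = avg m (K + n) (\<lambda>j. V (P' j))"
      by (rule avg_cong) (simp add: P'p N_def)
    also have "\<dots> = m (avg m M' (\<lambda>j. V (P' j))) (avg m M' (\<lambda>j. V (P' (2^M' + j))))"
      by (simp add: KnM)
    also have "avg m M' (\<lambda>j. V (P' j)) = avg m M' (\<lambda>i. V (cl!i))"
      by (rule avg_cong) (simp add: P'_def H_def)
    also have "avg m M' (\<lambda>j. V (P' (2^M' + j))) = avg m M' (\<lambda>i. V (d!i))"
      by (rule avg_cong) (simp add: P'_def H_def)
    finally show ?thesis .
  qed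
  have AFs: "AF = C + mset dF" using dF CAF by simp
  have AGs: "AG = C + mset dG" using dG CAG by simp
  have vf: "avg m K (\<lambda>a. V (f a)) = m (avg m M' (\<lambda>i. V (cl!i))) (avg m M' (\<lambda>i. V (dF!i)))"
    using reorder[of F f dF] avgE[of f] AFs ldF by (simp add: F_def AF_def)
  have vg: "avg m K (\<lambda>a. V (g a)) = m (avg m M' (\<lambda>i. V (cl!i))) (avg m M' (\<lambda>i. V (dG!i)))"
    using reorder[of G g dG] avgE[of g] AGs ldG by (simp add: G_def AG_def)
  have wd: "(\<Sum>a<(2::nat)^M'. weight (dF!a) j) = (\<Sum>a<(2::nat)^M'. weight (dG!a) j)" for j
  proof -
    have "(\<Sum>t\<in>#AF. weight t j) = (\<Sum>t\<in>#AG. weight t j)"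
      unfolding AF_def AG_def wsum_upto by (rule wFG)
    then have "(\<Sum>t\<in>#C. weight t j) + (\<Sum>t\<in>#mset dF. weight t j) = (\<Sum>t\<in>#C. weight t j) + (\<Sum>t\<in>#mset dG. weight t j)"
      by (simp add: AFs AGs)
    then have "(\<Sum>t\<in>#mset dF. weight t j) = (\<Sum>t\<in>#mset dG. weight t j)" by simp
    then show ?thesis using ldF ldG by (simp add: wsum_list[symmetric] H_def)
  qed
  show ?thesis
    apply (rule exI[of _ "avg m M' (\<lambda>i. V (cl!i))"])
    apply (rule exI[of _ M'])
    apply (rule exI[of _ "\<lambda>i. dF!i"])
    apply (rule exI[of _ "\<lambda>i. dG!i"])
    using wd vf vg by (simp add: V_def)
qed

theorem mainTheorem11:
  fixes m :: "'a \<Rightarrow> 'a \<Rightarrow> 'a" and s t :: "'i tree"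
  assumes "iterative m"
    and "weight s = weight t"
  shows "\<forall>x :: 'i \<Rightarrow> 'a. val m s x = val m t x"
proof
  fix x :: "'i \<Rightarrow> 'a"
  define R where "R = {(avg m K (\<lambda>a. val m (f a) x), avg m K (\<lambda>a. val m (g a) x)) | K f g.
     \<forall>j. (\<Sum>a<(2::nat)^K. weight (f a) j) = (\<Sum>a<(2::nat)^K. weight (g a) j)}"
  have st: "\<forall>(a,b)\<in>R. \<exists>c a' b'. (a',b') \<in> R \<and> a = m c a' \<and> b = m c b'"
  proof (clarify)
    fix a b assume "(a, b) \<in> R"
    then obtain K f g where ab: "a = avg m K (\<lambda>a. val m (f a) x)" "b = avg m K (\<lambda>a. val m (g a) x)"
      and w: "\<forall>j. (\<Sum>a<(2::nat)^K. weight (f a) j) = (\<Sum>a<(2::nat)^K. weight (g a) j)"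
      unfolding R_def by blast
    from step[OF assms(1) w, of x] obtain c K' f' g' where
      w': "\<forall>j. (\<Sum>a<(2::nat)^K'. weight (f' a) j) = (\<Sum>a<(2::nat)^K'. weight (g' a) j)"
      and e: "avg m K (\<lambda>a. val m (f a) x) = m c (avg m K' (\<lambda>a. val m (f' a) x))"
             "avg m K (\<lambda>a. val m (g a) x) = m c (avg m K' (\<lambda>a. val m (g' a) x))"
      by blast
    have "(avg m K' (\<lambda>a. val m (f' a) x), avg m K' (\<lambda>a. val m (g' a) x)) \<in> R"
      unfolding R_def using w' by blast
    then show "\<exists>c a' b'. (a',b') \<in> R \<and> a = m c a' \<and> b = m c b'"
      using e ab by blast
  qed
  have "(avg m 0 (\<lambda>a. val m ((\<lambda>_. s) a) x), avg m 0 (\<lambda>a. val m ((\<lambda>_. t) a) x)) \<in> R"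
    unfolding R_def using assms(2) by (intro CollectI exI[of _ 0] exI[of _ "\<lambda>_. s"] exI[of _ "\<lambda>_. t"]) simp
  then have "(val m s x, val m t x) \<in> R" by simp
  from bisim[OF assms(1) st this] show "val m s x = val m t x" .
qed

end
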